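(* There exists $c\in\mathbb{N}$ such that for all $l\in\mathbb{N}$ and all $x,y\in\{0,1\}^*$, $$\mathrm{FS}^{l+c}(xy)\leq 2|x|+\mathrm{FS}^{l}(y)+2.$$
   Context: A finite-state transducer (FST) is a 4-tuple $T=(Q,\delta,\nu,q_0)$ with $Q$ a nonempty finite set of states, $\delta:Q\times\{0,1\}\to Q$ the transition function, $\nu:Q\times\{0,1\}\to\{0,1\}^*$ the output function, and $q_0\in Q$ the initial state; every state is assumed reachable from $q_0$. The extended transition function is $\widehat\delta(\lambda)=q_0$, $\widehat\delta(xa)=\delta(\widehat\delta(x),a)$, and the output of $T$ on $x$ is defined by $T(\lambda)=\lambda$, $T(xa)=T(x)\nu(\widehat\delta(x),a)$. Fix a standard binary representation $\sigma_T$ of each FST $T$ and let $|T|=|\sigma_T|$; let $\mathrm{FST}^{\leq k}=\{T\in\mathrm{FST}: |T|\le k\}$. For $k\in\mathbb{N}$ and $x\in\{0,1\}^*$, $\mathrm{FS}^k(x)=\min\{|p| : p\in\{0,1\}^*,\ \exists T\in\mathrm{FST}^{\leq k},\ T(p)=x\}$. Here $xy$ denotes concatenation. *)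

theory Defs
  imports Main "HOL-Library.Extended_Nat"
begin

text \<open>Binary strings are bool lists (False = 0, True = 1).

A finite-state transducer is represented concretely by a nonempty list of
state entries: the states are 0, ..., n-1 (n = length of the list), the
initial state is 0, and entry q = (d0, w0, d1, w1) gives
delta(q,0) = q + d0, nu(q,0) = w0, delta(q,1) = q + d1, nu(q,1) = w1
(transition targets are stored as signed offsets relative to the source state).\<close>

type_synonym fst_entry = "int \<times> bool list \<times> int \<times> bool list"
type_synonym fst = "fst_entry list"

definition fst_delta :: "fst \<Rightarrow> nat \<Rightarrow> bool \<Rightarrow> nat" where
  "fst_delta T q a =
     (case T ! q of (d0, w0, d1, w1) \<Rightarrow> nat (int q + (if a then d1 else d0)))"

definition fst_nu :: "fst \<Rightarrow> nat \<Rightarrow> bool \<Rightarrow> bool list" where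
  "fst_nu T q a = (case T ! q of (d0, w0, d1, w1) \<Rightarrow> (if a then w1 else w0))"

fun fst_deltahat_rev :: "fst \<Rightarrow> bool list \<Rightarrow> nat" where
  "fst_deltahat_rev T [] = 0"
| "fst_deltahat_rev T (a # xs) = fst_delta T (fst_deltahat_rev T xs) a"

definition fst_deltahat :: "fst \<Rightarrow> bool list \<Rightarrow> nat" where
  "fst_deltahat T x = fst_deltahat_rev T (rev x)"

fun fst_out_rev :: "fst \<Rightarrow> bool list \<Rightarrow> bool list" where
  "fst_out_rev T [] = []"
| "fst_out_rev T (a # xs) = fst_out_rev T xs @ fst_nu T (fst_deltahat_rev T xs) a"

definition fst_out :: "fst \<Rightarrow> bool list \<Rightarrow> bool list" where
  "fst_out T x = fst_out_rev T (rev x)"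

definition wf_fst :: "fst \<Rightarrow> bool" where
  "wf_fst T \<longleftrightarrow> T \<noteq> [] \<and>
     (\<forall>q < length T. \<forall>a. 0 \<le> int q + (case T ! q of (d0, w0, d1, w1) \<Rightarrow> if a then d1 else d0)
                          \<and> int q + (case T ! q of (d0, w0, d1, w1) \<Rightarrow> if a then d1 else d0) < int (length T)) \<and>
     (\<forall>q < length T. \<exists>x. fst_deltahat T x = q)"

fun bin_nat :: "nat \<Rightarrow> bool list" where
  "bin_nat n = (if n = 0 then [] else bin_nat (n div 2) @ [odd n])"

definition enc_bits :: "bool list \<Rightarrow> bool list" where
  "enc_bits w = concat (map (\<lambda>b. [True, b]) w) @ [False]"

definition enc_int :: "int \<Rightarrow> bool list" where
  "enc_int i = (i < 0) # enc_bits (bin_nat (nat \<bar>i\<bar>))"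

definition enc_entry :: "fst_entry \<Rightarrow> bool list" where
  "enc_entry e = (case e of (d0, w0, d1, w1) \<Rightarrow> enc_int d0 @ enc_bits w0 @ enc_int d1 @ enc_bits w1)"

definition fst_code :: "fst \<Rightarrow> bool list" where
  "fst_code T = concat (map enc_entry T)"

definition fst_size :: "fst \<Rightarrow> nat" where
  "fst_size T = length (fst_code T)"

text \<open>FS^k(x); the minimum over the empty set is \<infinity>.\<close>
definition FS :: "nat \<Rightarrow> bool list \<Rightarrow> enat" where
  "FS k x = (INF p \<in> {p. \<exists>T. wf_fst T \<and> fst_size T \<le> k \<and> fst_out T p = x}. enat (length p))"

end

theory Submission
  imports Defs
begin

fun outq :: "fst \<Rightarrow> nat \<Rightarrow> bool list \<Rightarrow> bool list" where
  "outq T q [] = []"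
| "outq T q (a # xs) = fst_nu T q a @ outq T (fst_delta T q a) xs"

fun stq :: "fst \<Rightarrow> nat \<Rightarrow> bool list \<Rightarrow> nat" where
  "stq T q [] = q"
| "stq T q (a # xs) = stq T (fst_delta T q a) xs"

lemma dh_snoc: "fst_deltahat T (x @ [a]) = fst_delta T (fst_deltahat T x) a"
  by (simp add: fst_deltahat_def)

lemma out_snoc: "fst_out T (x @ [a]) = fst_out T x @ fst_nu T (fst_deltahat T x) a"
  by (simp add: fst_out_def fst_deltahat_def)

lemma run_app:
  "fst_out T (x @ y) = fst_out T x @ outq T (fst_deltahat T x) y
   \<and> fst_deltahat T (x @ y) = stq T (fst_deltahat T x) y"
proof (induction y arbitrary: x)
  case Nil
  then show ?case by simp
next
  case (Cons a ys)
  have "x @ a # ys = (x @ [a]) @ ys" by simp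
  then show ?case using Cons[of "x @ [a]"] by (simp add: dh_snoc out_snoc)
qed

lemma run0: "fst_out T p = outq T 0 p" "fst_deltahat T p = stq T 0 p"
  using run_app[of T "[]" p] by (simp_all add: fst_out_def fst_deltahat_def)

definition pre :: fst where
  "pre = [(2, [], 1, []), (-1, [False], -1, [True]), (1, [], 1, [])]"

lemma wf_delta_lt:
  assumes "wf_fst T" "q < length T"
  shows "fst_delta T q a < length T"
proof -
  obtain d0 w0 d1 w1 where e: "T ! q = (d0, w0, d1, w1)" by (cases "T ! q") auto
  from assms e have "0 \<le> int q + (if a then d1 else d0)" "int q + (if a then d1 else d0) < int (length T)"
    unfolding wf_fst_def by (metis (no_types, lifting) case_prod_conv)+
  then show ?thesis using e by (simp add: fst_delta_def)
qed

lemma shift_delta: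
  assumes "wf_fst T" "q < length T"
  shows "fst_delta (pre @ T) (q + 3) a = fst_delta T q a + 3"
    "fst_nu (pre @ T) (q + 3) a = fst_nu T q a"
proof -
  obtain d0 w0 d1 w1 where e: "T ! q = (d0, w0, d1, w1)" by (cases "T ! q") auto
  from assms e have "0 \<le> int q + (if a then d1 else d0)"
    unfolding wf_fst_def by (metis (no_types, lifting) case_prod_conv)
  moreover have "(pre @ T) ! (q + 3) = T ! q" by (simp add: pre_def nth_append)
  ultimately show "fst_delta (pre @ T) (q + 3) a = fst_delta T q a + 3"
    "fst_nu (pre @ T) (q + 3) a = fst_nu T q a"
    using e by (auto simp: fst_delta_def fst_nu_def)
qed

lemma shift_run:
  assumes "wf_fst T" "q < length T"
  shows "outq (pre @ T) (q + 3) p = outq T q p \<and> stq (pre @ T) (q + 3) p = stq T q p + 3"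
  using assms(2)
proof (induction p arbitrary: q)
  case Nil
  then show ?case by simp
next
  case (Cons a p)
  have "fst_delta T q a < length T" using wf_delta_lt[OF assms(1) Cons.prems] .
  then show ?case using Cons.IH shift_delta[OF assms(1) Cons.prems] by simp
qed

definition enc :: "bool list \<Rightarrow> bool list" where
  "enc x = concat (map (\<lambda>b. [True, b]) x)"

lemma prefix_run:
  "outq (pre @ T) 0 (enc x @ [False, False] @ p) = x @ outq (pre @ T) 3 p
   \<and> stq (pre @ T) 0 (enc x @ [False, False] @ p) = stq (pre @ T) 3 p"
proof (induction x)
  case Nil
  then show ?case
    by (simp add: enc_def pre_def fst_delta_def fst_nu_def nth_append)
next
  case (Cons b x)
  have "enc (b # x) @ [False, False] @ p = True # b # (enc x @ [False, False] @ p)"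
    by (simp add: enc_def)
  moreover have "fst_delta (pre @ T) 0 True = 1" "fst_nu (pre @ T) 0 True = []"
    "fst_delta (pre @ T) 1 b = 0" "fst_nu (pre @ T) 1 b = [b]"
    by (simp_all add: pre_def fst_delta_def fst_nu_def nth_append)
  ultimately show ?case using Cons by simp
qed

lemma len_enc: "length (enc x) = 2 * length x"
  by (induction x) (auto simp: enc_def)

lemma wf_pre:
  assumes "wf_fst T"
  shows "wf_fst (pre @ T)"
proof -
  have ne: "pre @ T \<noteq> []" by (simp add: pre_def)
  have rng: "\<forall>q < length (pre @ T). \<forall>a. 0 \<le> int q + (case (pre @ T) ! q of (d0, w0, d1, w1) \<Rightarrow> if a then d1 else d0)
                          \<and> int q + (case (pre @ T) ! q of (d0, w0, d1, w1) \<Rightarrow> if a then d1 else d0) < int (length (pre @ T))"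
  proof (intro allI impI)
    fix q a assume q: "q < length (pre @ T)"
    have Tne: "T \<noteq> []" using assms by (simp add: wf_fst_def)
    show "0 \<le> int q + (case (pre @ T) ! q of (d0, w0, d1, w1) \<Rightarrow> if a then d1 else d0)
                          \<and> int q + (case (pre @ T) ! q of (d0, w0, d1, w1) \<Rightarrow> if a then d1 else d0) < int (length (pre @ T))"
    proof (cases "q < 3")
      case True
      then have "q = 0 \<or> q = 1 \<or> q = 2" by auto
      then show ?thesis using Tne by (auto simp: pre_def nth_append)
    next
      case False
      then obtain r where r: "q = r + 3" by (metis add.commute le_add_diff_inverse not_less)
      with q have rl: "r < length T" by (simp add: pre_def)
      have "(pre @ T) ! q = T ! r" using r by (simp add: pre_def nth_append)
      moreover have "0 \<le> int r + (case T ! r of (d0, w0, d1, w1) \<Rightarrow> if a then d1 else d0)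
                          \<and> int r + (case T ! r of (d0, w0, d1, w1) \<Rightarrow> if a then d1 else d0) < int (length T)"
        using assms rl unfolding wf_fst_def by blast
      ultimately show ?thesis using r by (simp add: pre_def)
    qed
  qed
  have reach: "\<forall>q < length (pre @ T). \<exists>x. fst_deltahat (pre @ T) x = q"
  proof (intro allI impI)
    fix q assume q: "q < length (pre @ T)"
    show "\<exists>x. fst_deltahat (pre @ T) x = q"
    proof (cases "q < 3")
      case True
      then have "q = 0 \<or> q = 1 \<or> q = 2" by auto
      then show ?thesis
      proof (elim disjE)
        assume "q = 0" then show ?thesis by (intro exI[of _ "[]"]) (simp add: fst_deltahat_def)
      next
        assume "q = 1" then show ?thesis
          by (intro exI[of _ "[True]"]) (simp add: fst_deltahat_def fst_delta_def pre_def)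
      next
        assume "q = 2" then show ?thesis
          by (intro exI[of _ "[False]"]) (simp add: fst_deltahat_def fst_delta_def pre_def)
      qed
    next
      case False
      then obtain r where r: "q = r + 3" by (metis add.commute le_add_diff_inverse not_less)
      with q have rl: "r < length T" by (simp add: pre_def)
      obtain z where z: "fst_deltahat T z = r" using assms rl unfolding wf_fst_def by blast
      have T0: "0 < length T" using rl by (cases T) auto
      have "fst_deltahat (pre @ T) (enc [] @ [False, False] @ z) = stq (pre @ T) (0 + 3) z"
        using run0(2) prefix_run[of T "[]" z] by simp
      also have "\<dots> = stq T 0 z + 3" using shift_run[OF assms T0] by blast
      also have "\<dots> = q" using z r run0(2) by simp
      finally show ?thesis by blast
    qed
  qed
  show ?thesis using ne rng reach unfolding wf_fst_def by blast
qed

lemma size_pre: "fst_size (pre @ T) = fst_size pre + fst_size T"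
  by (simp add: fst_size_def fst_code_def)

theorem lemma4:
  "\<exists>c::nat. \<forall>(l::nat) (x::bool list) (y::bool list).
     FS (l + c) (x @ y) \<le> enat (2 * length x) + FS l y + 2"
proof (intro exI allI)
  fix l x y
  let ?S = "{p. \<exists>T. wf_fst T \<and> fst_size T \<le> l \<and> fst_out T p = y}"
  show "FS (l + fst_size pre) (x @ y) \<le> enat (2 * length x) + FS l y + 2"
  proof (cases "?S = {}")
    case True
    then have "FS l y = \<infinity>" unfolding FS_def by (simp only: image_empty Inf_empty top_enat_def)
    then show ?thesis by simp
  next
    case False
    then obtain p0 where "p0 \<in> ?S" by blast
    then have "Inf ((\<lambda>p. enat (length p)) ` ?S) \<in> (\<lambda>p. enat (length p)) ` ?S"
      by (intro wellorder_InfI) blast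
    then obtain p where pS: "p \<in> ?S" and FSe: "FS l y = enat (length p)"
      unfolding FS_def by blast
    then obtain T where T: "wf_fst T" "fst_size T \<le> l" "fst_out T p = y" by blast
    have T0: "0 < length T" using T(1) by (simp add: wf_fst_def)
    let ?p = "enc x @ [False, False] @ p"
    have "fst_out (pre @ T) ?p = x @ outq (pre @ T) (0 + 3) p"
      using run0(1) prefix_run by simp
    also have "\<dots> = x @ y" using shift_run[OF T(1) T0] run0(1) T(3) by simp
    finally have out: "fst_out (pre @ T) ?p = x @ y" .
    have "?p \<in> {p. \<exists>T. wf_fst T \<and> fst_size T \<le> l + fst_size pre \<and> fst_out T p = x @ y}"
      using wf_pre[OF T(1)] out size_pre[of T] T(2) by auto
    then have "FS (l + fst_size pre) (x @ y) \<le> enat (length ?p)"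
      unfolding FS_def by (rule INF_lower)
    also have "\<dots> = enat (2 * length x) + FS l y + 2"
      using FSe len_enc[of x] by (simp add: numeral_eq_enat)
    finally show ?thesis .
  qed
qed

end
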